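(* Consider an instance of the Nash equilibrium complementarity problem (NECP) that satisfies the dominance condition, and the corresponding instance of the tropical Nash equilibrium complementarity problem (TNECP) obtained by the logarithmic image, i.e. $M^-=\log(-M)$ and $q^+=\log q$ (entrywise, with $\log 0=-\infty$). Then the solutions of the two problems have the same supports.
   Context: NECP: given a square real matrix $M$ whose columns are nonpositive with at least one negative entry, and a vector $q$ with positive entries, find $(w,z)$ with $w=Mz+q$, $w^\top z=0$, $z\neq 0$, $w,z\geq 0$. TNECP over the max-plus semifield $\mathbb{T}=\mathbb{R}\cup\{-\infty\}$ ($\oplus=\max$, $\odot=+$): find $(w,z)\in\mathbb{T}^n\times\mathbb{T}^n$ with $w\oplus M^-\odot z=q^+$, $w^\top\odot z=-\infty$, $z\neq-\infty$. The support of a vector is the set of indices of its nonzero entries (classical) or non-$(-\infty)$ entries (tropical). Dominance condition: for a system $Ax=b$, $x\geq 0$ with $A\geq 0$ having a nonzero entry in every column and $b>0$, the normalized matrix is $(\operatorname{diag} b)^{-1}A(\operatorname{diag} u)^{-1}$ where $u_j$ is the largest entry of the $j$th column of $(\operatorname{diag} b)^{-1}A$; it is columnwise normal (entries in $[0,1]$, each column has a $1$-entry). A columnwise normal matrix with $n$ rows satisfies the dominance condition if (a) some $n\times n$ submatrix covers a permutation matrix (i.e. the difference is entrywise nonnegative), and (b) every $n\times n$ submatrix covering a permutation matrix has all row sums less than $2$. The NECP instance satisfies the dominance condition if the normalized matrix of the system $(I\ \ -M)\binom{w}{z}=q$ does. *)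

theory Defs
  imports Complex_Main "HOL-Library.Extended_Real"
begin

definition col_scale :: "('m::finite \<Rightarrow> 'c \<Rightarrow> real) \<Rightarrow> ('m \<Rightarrow> real) \<Rightarrow> 'c \<Rightarrow> real" where
  "col_scale A b j = Max (range (\<lambda>i. A i j / b i))"

text \<open>Normalized matrix (diag b)^-1 A (diag u)^-1 with u_j the largest entry of column j of (diag b)^-1 A.\<close>
definition normalized_matrix :: "('m::finite \<Rightarrow> 'c \<Rightarrow> real) \<Rightarrow> ('m \<Rightarrow> real) \<Rightarrow> 'm \<Rightarrow> 'c \<Rightarrow> real" where
  "normalized_matrix A b i j = A i j / (b i * col_scale A b j)"

definition covers_permutation :: "('m::finite \<Rightarrow> 'c \<Rightarrow> real) \<Rightarrow> 'c set \<Rightarrow> bool" where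
  "covers_permutation N S \<longleftrightarrow> (\<exists>\<sigma>. bij_betw \<sigma> (UNIV :: 'm set) S \<and> (\<forall>i. N i (\<sigma> i) - 1 \<ge> 0))"

definition dominance_condition :: "('m::finite \<Rightarrow> 'c::finite \<Rightarrow> real) \<Rightarrow> bool" where
  "dominance_condition (N :: 'm \<Rightarrow> 'c \<Rightarrow> real) \<longleftrightarrow>
     (\<exists>S. card S = card (UNIV :: 'm set) \<and> covers_permutation N S) \<and>
     (\<forall>S. card S = card (UNIV :: 'm set) \<and> covers_permutation N S \<longrightarrow> (\<forall>i. (\<Sum>j\<in>S. N i j) < 2))"

text \<open>System matrix (I  -M) of the NECP; columns Inl j correspond to w, Inr j to z.\<close>
definition necp_system :: "('n \<Rightarrow> 'n \<Rightarrow> real) \<Rightarrow> 'n \<Rightarrow> 'n + 'n \<Rightarrow> real" where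
  "necp_system M i c = (case c of Inl j \<Rightarrow> (if i = j then 1 else 0) | Inr j \<Rightarrow> - M i j)"

definition necp_dominance :: "('n::finite \<Rightarrow> 'n \<Rightarrow> real) \<Rightarrow> ('n \<Rightarrow> real) \<Rightarrow> bool" where
  "necp_dominance M q \<longleftrightarrow> dominance_condition (normalized_matrix (necp_system M) q)"

definition necp_solution :: "('n::finite \<Rightarrow> 'n \<Rightarrow> real) \<Rightarrow> ('n \<Rightarrow> real) \<Rightarrow> ('n \<Rightarrow> real) \<Rightarrow> ('n \<Rightarrow> real) \<Rightarrow> bool" where
  "necp_solution M q w z \<longleftrightarrow>
     (\<forall>i. w i = (\<Sum>j\<in>UNIV. M i j * z j) + q i) \<and>
     (\<Sum>i\<in>UNIV. w i * z i) = 0 \<and> z \<noteq> (\<lambda>_. 0) \<and> (\<forall>i. w i \<ge> 0 \<and> z i \<ge> 0)"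

text \<open>Tropical (max-plus) semifield R \<union> {-\<infinity>} represented inside ereal (excluding +\<infinity>).\<close>
definition trop_solution :: "('n::finite \<Rightarrow> 'n \<Rightarrow> ereal) \<Rightarrow> ('n \<Rightarrow> ereal) \<Rightarrow> ('n \<Rightarrow> ereal) \<Rightarrow> ('n \<Rightarrow> ereal) \<Rightarrow> bool" where
  "trop_solution Mm qp w z \<longleftrightarrow>
     (\<forall>i. w i \<noteq> \<infinity> \<and> z i \<noteq> \<infinity>) \<and>
     (\<forall>i. max (w i) (Max (range (\<lambda>j. Mm i j + z j))) = qp i) \<and>
     Max (range (\<lambda>i. w i + z i)) = - \<infinity> \<and>
     z \<noteq> (\<lambda>_. - \<infinity>)"

definition trop_log :: "real \<Rightarrow> ereal" where
  "trop_log x = (if x = 0 then - \<infinity> else ereal (ln x))"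

definition supp :: "('n \<Rightarrow> real) \<Rightarrow> 'n set" where
  "supp v = {i. v i \<noteq> 0}"

definition trop_supp :: "('n \<Rightarrow> ereal) \<Rightarrow> 'n set" where
  "trop_supp v = {i. v i \<noteq> - \<infinity>}"

end

theory Submission
  imports Defs "HOL-Analysis.Analysis"
begin


lemma row_split:
  fixes P :: "'n::finite \<Rightarrow> 'n \<Rightarrow> real"
  assumes "P i i = 1"
  shows "(\<Sum>m\<in>UNIV. P i m * y m) = y i + (\<Sum>m\<in>UNIV-{i}. P i m * y m)"
  using assms by (simp add: sum.remove[of UNIV i])

lemma ex_argmin: fixes y :: "'n::finite \<Rightarrow> real" shows "\<exists>p. \<forall>m. y p \<le> y m"
proof -
  have "Min (range y) \<in> range y" by (rule Min_in) auto
  then obtain p where "y p = Min (range y)" by (metis rangeE)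
  then have "\<forall>m. y p \<le> y m" using Min_le[of "range y"] by auto
  then show ?thesis by blast
qed

lemma ex_argmax: fixes y :: "'n::finite \<Rightarrow> real" shows "\<exists>p. \<forall>m. y m \<le> y p"
  using ex_argmin[of "\<lambda>m. - y m"] by auto

lemma inj_core:
  fixes P :: "'n::finite \<Rightarrow> 'n \<Rightarrow> real"
  assumes Pnn: "\<forall>i m. 0 \<le> P i m" and Pd: "\<forall>i. P i i = 1"
   and rho: "\<forall>i. (\<Sum>m\<in>UNIV-{i}. P i m) \<le> \<rho>" "\<rho> < 1"
   and sol: "\<forall>i. (\<Sum>m\<in>UNIV. P i m * d m) = 0"
  shows "d = (\<lambda>_. 0)"
proof -
  obtain p where p: "\<forall>m. \<bar>d m\<bar> \<le> \<bar>d p\<bar>" using ex_argmax[of "\<lambda>m. \<bar>d m\<bar>"] by auto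
  have "d p = - (\<Sum>m\<in>UNIV-{p}. P p m * d m)" using sol row_split[of P p d] Pd by auto
  then have "\<bar>d p\<bar> \<le> (\<Sum>m\<in>UNIV-{p}. \<bar>P p m * d m\<bar>)" by (simp add: sum_abs)
  also have "\<dots> \<le> (\<Sum>m\<in>UNIV-{p}. P p m * \<bar>d p\<bar>)"
    by (rule sum_mono) (simp add: abs_mult Pnn mult_left_mono p)
  also have "\<dots> = (\<Sum>m\<in>UNIV-{p}. P p m) * \<bar>d p\<bar>" by (simp add: sum_distrib_right)
  also have "\<dots> \<le> \<rho> * \<bar>d p\<bar>" using rho by (simp add: mult_right_mono)
  finally have "\<bar>d p\<bar> \<le> \<rho> * \<bar>d p\<bar>" .
  then have "\<bar>d p\<bar> = 0"
  proof (rule contrapos_pp)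
    assume "\<bar>d p\<bar> \<noteq> 0"
    then have "0 < \<bar>d p\<bar>" by simp
    then have "\<rho> * \<bar>d p\<bar> < 1 * \<bar>d p\<bar>" using rho(2) by (intro mult_strict_right_mono)
    then show "\<not> \<bar>d p\<bar> \<le> \<rho> * \<bar>d p\<bar>" by simp
  qed
  then have "\<forall>m. d m = 0" using p by (metis abs_le_zero_iff order.trans)
  then show ?thesis by auto
qed

lemma exists_sol:
  fixes P :: "'n::finite \<Rightarrow> 'n \<Rightarrow> real"
  assumes Pnn: "\<forall>i m. 0 \<le> P i m" and Pd: "\<forall>i. P i i = 1"
   and rho: "\<forall>i. (\<Sum>m\<in>UNIV-{i}. P i m) \<le> \<rho>" "\<rho> < 1"
  shows "\<exists>y. \<forall>i. (\<Sum>m\<in>UNIV. P i m * y m) = b i"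
proof -
  define f where "f = (\<lambda>v::real^'n. \<chi> i. \<Sum>m\<in>UNIV. P i m * v$m)"
  have lin: "linear f" unfolding f_def
    by (rule linearI) (simp_all add: vec_eq_iff algebra_simps sum.distrib sum_distrib_left)
  have "inj f"
  proof (rule linear_injective_0[OF lin, THEN iffD2], intro allI impI)
    fix v assume "f v = 0"
    then have "\<forall>i. (\<Sum>m\<in>UNIV. P i m * v$m) = 0" unfolding f_def by (simp add: vec_eq_iff)
    from inj_core[OF Pnn Pd rho this] show "v = 0" by (simp add: vec_eq_iff fun_eq_iff)
  qed
  then have "surj f" using lin linear_injective_imp_surjective by blast
  then obtain v where "f v = (\<chi> i. b i)" by (metis surjE)
  then have "\<forall>i. (\<Sum>m\<in>UNIV. P i m * v$m) = b i" unfolding f_def by (simp add: vec_eq_iff)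
  then show ?thesis by blast
qed

lemma pos_sol:
  fixes P :: "'n::finite \<Rightarrow> 'n \<Rightarrow> real" and y b :: "'n \<Rightarrow> real"
  assumes Pnn: "\<forall>i m. 0 \<le> P i m" and Pd: "\<forall>i. P i i = 1"
   and rho: "\<forall>i. (\<Sum>m\<in>UNIV-{i}. P i m) \<le> \<rho>" "0 \<le> \<rho>" "\<rho> < 1"
   and b: "\<forall>i. \<rho> < b i \<and> b i \<le> 1"
   and sol: "\<forall>i. (\<Sum>m\<in>UNIV. P i m * y m) = b i"
  shows "\<forall>m. 0 < y m"
proof -
  obtain p where p: "\<forall>m. y p \<le> y m" using ex_argmin by blast
  obtain q where q: "\<forall>m. y m \<le> y q" using ex_argmax by blast
  have eq: "y i = b i - (\<Sum>m\<in>UNIV-{i}. P i m * y m)" for i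
    using sol row_split[of P i y] Pd by auto
  have "0 < y p"
  proof (rule ccontr)
    assume np: "\<not> 0 < y p"
    have "(\<Sum>m\<in>UNIV-{q}. P q m * y m) \<ge> (\<Sum>m\<in>UNIV-{q}. P q m * y p)"
      by (rule sum_mono) (simp add: Pnn mult_left_mono p)
    also have "(\<Sum>m\<in>UNIV-{q}. P q m * y p) = (\<Sum>m\<in>UNIV-{q}. P q m) * y p" by (simp add: sum_distrib_right)
    also have "\<dots> \<ge> \<rho> * y p" using rho np by (simp add: mult_right_mono_neg)
    finally have yq: "y q \<le> 1 - \<rho> * y p" using eq[of q] b[rule_format, of q] by linarith
    have "(\<Sum>m\<in>UNIV-{p}. P p m * y m) \<le> (\<Sum>m\<in>UNIV-{p}. P p m * y q)"
      by (rule sum_mono) (simp add: Pnn mult_left_mono q)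
    also have "\<dots> = (\<Sum>m\<in>UNIV-{p}. P p m) * y q" by (simp add: sum_distrib_right)
    finally have s: "(\<Sum>m\<in>UNIV-{p}. P p m * y m) \<le> (\<Sum>m\<in>UNIV-{p}. P p m) * y q" .
    show False
    proof (cases "y q \<le> 0")
      case True
      have "(\<Sum>m\<in>UNIV-{p}. P p m) * y q \<le> 0"
        using True by (simp add: mult_nonneg_nonpos Pnn sum_nonneg)
      then show False using s eq[of p] b[rule_format, of p] rho np by linarith
    next
      case False
      have "(\<Sum>m\<in>UNIV-{p}. P p m) * y q \<le> \<rho> * y q" using rho False by (simp add: mult_right_mono)
      also have "\<dots> \<le> \<rho> * (1 - \<rho> * y p)" using yq rho by (simp add: mult_left_mono)
      finally have t: "(\<Sum>m\<in>UNIV-{p}. P p m * y m) \<le> \<rho> * (1 - \<rho> * y p)" using s by linarith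
      have "y p \<ge> b p - \<rho> * (1 - \<rho> * y p)" using eq[of p] t by linarith
      moreover have "\<rho> * (1 - \<rho> * y p) = \<rho> - \<rho> * \<rho> * y p" by (simp add: algebra_simps)
      ultimately have "y p \<ge> b p - \<rho> + \<rho> * \<rho> * y p" by linarith
      moreover have "\<rho> * \<rho> * y p \<ge> y p"
      proof -
        have "\<rho> * \<rho> \<le> 1" using rho by (simp add: mult_le_one)
        then show ?thesis using mult_right_mono_neg[of "\<rho>*\<rho>" 1 "y p"] np by simp
      qed
      ultimately show False using b[rule_format, of p] by linarith
    qed
  qed
  then show ?thesis using p by (meson less_le_trans)
qed



locale nmat =
  fixes N :: "'n::finite \<Rightarrow> 'n + 'n \<Rightarrow> real"
  assumes N01: "\<And>i c. 0 \<le> N i c \<and> N i c \<le> 1"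
    and Ncol: "\<And>c. \<exists>i. N i c = 1"
    and Ninl: "\<And>i j. i \<noteq> j \<Longrightarrow> N i (Inl j) = 0"
    and Ndom: "\<And>\<sigma> i. inj \<sigma> \<Longrightarrow> (\<forall>k. N k (\<sigma> k) = 1) \<Longrightarrow> (\<Sum>m\<in>UNIV. N i (\<sigma> m)) < 2"
begin

lemma Ninl1: "N j (Inl j) = 1"
  using Ncol[of "Inl j"] Ninl by (metis zero_neq_one)

lemma uniq: assumes "N i c = 1" "N k c = 1" shows "i = k"
proof (cases c)
  case (Inl j)
  then show ?thesis using assms Ninl by (metis zero_neq_one)
next
  case (Inr j)
  show ?thesis
  proof (rule ccontr)
    assume ik: "i \<noteq> k"
    define \<sigma> where "\<sigma> = (\<lambda>m. if m = i then Inr j else Inl m)"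
    have "inj \<sigma>" unfolding \<sigma>_def by (rule injI) (auto split: if_splits)
    moreover have "\<forall>m. N m (\<sigma> m) = 1" unfolding \<sigma>_def using assms Inr Ninl1 by auto
    ultimately have lt: "(\<Sum>m\<in>UNIV. N k (\<sigma> m)) < 2" by (rule Ndom)
    have "(\<Sum>m\<in>UNIV. N k (\<sigma> m)) = N k (\<sigma> i) + (\<Sum>m\<in>UNIV-{i}. N k (\<sigma> m))"
      by (simp add: sum.remove[of UNIV i])
    also have "N k (\<sigma> i) = 1" unfolding \<sigma>_def using assms Inr by simp
    also have "(\<Sum>m\<in>UNIV-{i}. N k (\<sigma> m)) = (\<Sum>m\<in>UNIV-{i}. if k = m then 1 else 0)"
      by (rule sum.cong) (auto simp: \<sigma>_def Ninl Ninl1)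
    also have "\<dots> = 1" using ik by (simp add: sum.delta)
    finally show False using lt by simp
  qed
qed

lemma cl_to_tr:
  assumes xnn: "\<forall>c. 0 \<le> x c" and eq: "\<forall>i. (\<Sum>c\<in>UNIV. N i c * x c) = 1"
  shows "\<exists>c. x c \<noteq> 0 \<and> N i0 c = 1"
proof (rule ccontr)
  assume H: "\<not> (\<exists>c. x c \<noteq> 0 \<and> N i0 c = 1)"
  define J where "J = {c. x c \<noteq> 0}"
  define r where "r c = (SOME i. N i c = 1)" for c
  have rN: "N (r c) c = 1" for c unfolding r_def using Ncol[of c] by (rule someI_ex)
  have rInl: "r (Inl m) = m" for m using uniq[OF rN Ninl1] .
  define R where "R = r ` J"
  have i0R: "i0 \<notin> R" unfolding R_def J_def using H rN by auto
  have "\<exists>c. c \<in> J \<and> r c = k \<and> (\<forall>c'\<in>J. r c' = k \<longrightarrow> N i0 c' \<le> N i0 c)" if k: "k \<in> R" for k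
  proof -
    define C where "C = {c\<in>J. r c = k}"
    have fC: "finite C" by simp
    have nC: "C \<noteq> {}" using k unfolding C_def R_def by auto
    have "Max (N i0 ` C) \<in> N i0 ` C" using fC nC by (intro Max_in) auto
    then obtain c where c: "c \<in> C" "N i0 c = Max (N i0 ` C)" by auto
    have "\<forall>c'\<in>C. N i0 c' \<le> N i0 c" using c(2) fC by auto
    then show ?thesis using c(1) unfolding C_def by auto
  qed
  then obtain ch where ch: "\<And>k. k \<in> R \<Longrightarrow> ch k \<in> J \<and> r (ch k) = k \<and> (\<forall>c'\<in>J. r c' = k \<longrightarrow> N i0 c' \<le> N i0 (ch k))"
    by metis
  define \<sigma> where "\<sigma> = (\<lambda>m. if m \<in> R then ch m else Inl m)"
  have "inj \<sigma>"
  proof (rule injI)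
    fix a b assume ab: "\<sigma> a = \<sigma> b"
    show "a = b"
    proof (cases "a \<in> R"; cases "b \<in> R")
      assume a: "a \<in> R" and b: "b \<in> R"
      then have "ch a = ch b" using ab by (simp add: \<sigma>_def)
      then show ?thesis using ch[OF a] ch[OF b] by metis
    next
      assume a: "a \<in> R" and b: "b \<notin> R"
      then have "ch a = Inl b" using ab by (simp add: \<sigma>_def)
      then show ?thesis using ch[OF a] rInl[of b] by simp
    next
      assume a: "a \<notin> R" and b: "b \<in> R"
      then have "ch b = Inl a" using ab by (simp add: \<sigma>_def)
      then show ?thesis using ch[OF b] rInl[of a] by simp
    next
      assume "a \<notin> R" "b \<notin> R" then show ?thesis using ab unfolding \<sigma>_def by simp
    qed
  qed
  moreover have "\<forall>k. N k (\<sigma> k) = 1"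
  proof
    fix k show "N k (\<sigma> k) = 1"
      using ch[of k] rN[of "ch k"] Ninl1[of k] by (cases "k \<in> R") (auto simp: \<sigma>_def)
  qed
  ultimately have lt: "(\<Sum>m\<in>UNIV. N i0 (\<sigma> m)) < 2" by (rule Ndom)
  have "(\<Sum>m\<in>UNIV. N i0 (\<sigma> m)) = N i0 (\<sigma> i0) + (\<Sum>m\<in>UNIV-{i0}. N i0 (\<sigma> m))"
    by (simp add: sum.remove[of UNIV i0])
  also have "N i0 (\<sigma> i0) = 1" unfolding \<sigma>_def using i0R Ninl1 by simp
  finally have lt1: "(\<Sum>m\<in>UNIV-{i0}. N i0 (\<sigma> m)) < 1" using lt by simp
  have "(\<Sum>k\<in>R. N i0 (ch k)) = (\<Sum>k\<in>R. N i0 (\<sigma> k))" by (rule sum.cong) (auto simp: \<sigma>_def)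
  also have "\<dots> \<le> (\<Sum>m\<in>UNIV-{i0}. N i0 (\<sigma> m))"
    by (rule sum_mono2) (use i0R N01 in auto)
  finally have sR: "(\<Sum>k\<in>R. N i0 (ch k)) < 1" using lt1 by simp
  have Xk: "(\<Sum>c\<in>{c\<in>J. r c = k}. x c) \<le> 1" for k
  proof -
    have "(\<Sum>c\<in>{c\<in>J. r c = k}. x c) = (\<Sum>c\<in>{c\<in>J. r c = k}. N k c * x c)"
      by (rule sum.cong) (use rN in auto)
    also have "\<dots> \<le> (\<Sum>c\<in>UNIV. N k c * x c)"
      by (rule sum_mono2) (use N01 xnn in auto)
    finally show ?thesis using eq by simp
  qed
  have "1 = (\<Sum>c\<in>UNIV. N i0 c * x c)" using eq by simp
  also have "\<dots> = (\<Sum>c\<in>J. N i0 c * x c)"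
    by (rule sum.mono_neutral_right) (auto simp: J_def)
  also have "\<dots> = (\<Sum>k\<in>R. \<Sum>c\<in>{c\<in>J. r c = k}. N i0 c * x c)"
    by (rule sum.group[symmetric]) (auto simp: R_def)
  also have "\<dots> \<le> (\<Sum>k\<in>R. N i0 (ch k) * (\<Sum>c\<in>{c\<in>J. r c = k}. x c))"
  proof (rule sum_mono)
    fix k assume k: "k \<in> R"
    have "(\<Sum>c\<in>{c\<in>J. r c = k}. N i0 c * x c) \<le> (\<Sum>c\<in>{c\<in>J. r c = k}. N i0 (ch k) * x c)"
      by (rule sum_mono) (use ch[OF k] xnn in \<open>auto intro: mult_right_mono\<close>)
    then show "(\<Sum>c\<in>{c\<in>J. r c = k}. N i0 c * x c) \<le> N i0 (ch k) * (\<Sum>c\<in>{c\<in>J. r c = k}. x c)"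
      by (simp add: sum_distrib_left)
  qed
  also have "\<dots> \<le> (\<Sum>k\<in>R. N i0 (ch k))"
    by (rule sum_mono) (use Xk N01 in \<open>auto intro: mult_left_le\<close>)
  finally show False using sR by simp
qed

lemma tr_to_cl:
  assumes cov: "\<forall>i. \<exists>c\<in>J. N i c = 1"
  shows "\<exists>x. (\<forall>c. 0 \<le> x c) \<and> {c. x c \<noteq> 0} = J \<and> (\<forall>i. (\<Sum>c\<in>UNIV. N i c * x c) = 1)"
proof -
  obtain \<sigma> where \<sigma>: "\<forall>i. \<sigma> i \<in> J \<and> N i (\<sigma> i) = 1" using cov by metis
  have inj: "inj \<sigma>" by (rule injI) (metis \<sigma> uniq)
  define P where "P i m = N i (\<sigma> m)" for i m
  have Pnn: "\<forall>i m. 0 \<le> P i m" using N01 by (simp add: P_def)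
  have Pd: "\<forall>i. P i i = 1" using \<sigma> by (simp add: P_def)
  have off: "(\<Sum>m\<in>UNIV-{i}. P i m) < 1" for i
  proof -
    have "(\<Sum>m\<in>UNIV. P i m) < 2" unfolding P_def using Ndom[OF inj] \<sigma> by blast
    moreover have "(\<Sum>m\<in>UNIV. P i m) = P i i + (\<Sum>m\<in>UNIV-{i}. P i m)" by (simp add: sum.remove[of UNIV i])
    ultimately show ?thesis using Pd by simp
  qed
  define \<rho> where "\<rho> = Max (range (\<lambda>i. \<Sum>m\<in>UNIV-{i}. P i m))"
  have rho_ge: "\<forall>i. (\<Sum>m\<in>UNIV-{i}. P i m) \<le> \<rho>" unfolding \<rho>_def by (auto intro: Max_ge)
  have "\<rho> \<in> range (\<lambda>i. \<Sum>m\<in>UNIV-{i}. P i m)" unfolding \<rho>_def by (rule Max_in) auto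
  then have rho1: "\<rho> < 1" using off by auto
  have "0 \<le> (\<Sum>m\<in>UNIV-{i}. P i m)" for i by (rule sum_nonneg) (use Pnn in auto)
  then have rho0: "0 \<le> \<rho>" using rho_ge order_trans by blast
  define D where "D = J - range \<sigma>"
  define K where "K i = (\<Sum>c\<in>D. N i c)" for i
  define Ks where "Ks = (\<Sum>i\<in>UNIV. K i)"
  have K0: "0 \<le> K i" for i unfolding K_def by (rule sum_nonneg) (use N01 in auto)
  have KKs: "K i \<le> Ks" for i unfolding Ks_def by (rule member_le_sum) (use K0 in auto)
  have Ks0: "0 \<le> Ks" using K0 KKs order_trans by blast
  define \<epsilon> where "\<epsilon> = (1 - \<rho>) / (2 * (Ks + 1))"
  have eps0: "0 < \<epsilon>" using rho1 Ks0 by (simp add: \<epsilon>_def)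
  have epsK: "\<epsilon> * K i \<le> (1 - \<rho>) / 2" for i
  proof -
    have "\<epsilon> * K i \<le> \<epsilon> * (Ks + 1)" using KKs[of i] eps0 by (intro mult_left_mono) auto
    also have "\<dots> = (1-\<rho>)/2" using Ks0 by (simp add: \<epsilon>_def field_simps)
    finally show ?thesis .
  qed
  define b where "b i = 1 - \<epsilon> * K i" for i
  have "0 \<le> \<epsilon> * K i" for i using eps0 K0 by simp
  then have b: "\<forall>i. \<rho> < b i \<and> b i \<le> 1"
  proof (intro allI)
    fix i assume h: "\<And>i. 0 \<le> \<epsilon> * K i"
    show "\<rho> < b i \<and> b i \<le> 1" unfolding b_def using epsK[of i] rho1 h[of i] by argo
  qed
  obtain y where y: "\<forall>i. (\<Sum>m\<in>UNIV. P i m * y m) = b i" using exists_sol[OF Pnn Pd rho_ge rho1] by blast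
  have ypos: "\<forall>m. 0 < y m" by (rule pos_sol[OF Pnn Pd rho_ge rho0 rho1 b y])
  define x where "x c = (if c \<in> range \<sigma> then y (inv \<sigma> c) else if c \<in> D then \<epsilon> else 0)" for c
  have xs: "x (\<sigma> m) = y m" for m using inj by (simp add: x_def)
  have xnn: "\<forall>c. 0 \<le> x c" using ypos eps0 by (auto simp: x_def less_imp_le)
  have rs: "range \<sigma> \<subseteq> J" using \<sigma> by auto
  have supp: "{c. x c \<noteq> 0} = J"
  proof (intro equalityI subsetI)
    fix c assume "c \<in> {c. x c \<noteq> 0}" then show "c \<in> J" using rs by (auto simp: x_def D_def split: if_splits)
  next
    fix c assume c: "c \<in> J"
    show "c \<in> {c. x c \<noteq> 0}"
    proof (cases "c \<in> range \<sigma>")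
      case True then show ?thesis using ypos by (auto simp: x_def) (metis less_irrefl)
    next
      case False then show ?thesis using c eps0 by (auto simp: x_def D_def)
    qed
  qed
  have "(\<Sum>c\<in>UNIV. N i c * x c) = 1" for i
  proof -
    have "(\<Sum>c\<in>UNIV. N i c * x c) = (\<Sum>c\<in>J. N i c * x c)"
      by (rule sum.mono_neutral_right) (use rs in \<open>auto simp: x_def D_def\<close>)
    also have "\<dots> = (\<Sum>c\<in>D. N i c * x c) + (\<Sum>c\<in>range \<sigma>. N i c * x c)"
      unfolding D_def by (rule sum.subset_diff[OF rs]) simp
    also have "(\<Sum>c\<in>range \<sigma>. N i c * x c) = (\<Sum>m\<in>UNIV. P i m * y m)"
      by (simp add: sum.reindex[OF inj] xs P_def)
    also have "(\<Sum>c\<in>D. N i c * x c) = (\<Sum>c\<in>D. \<epsilon> * N i c)"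
      by (rule sum.cong) (auto simp: x_def D_def)
    also have "\<dots> = \<epsilon> * K i" by (simp add: K_def sum_distrib_left)
    finally show ?thesis using y by (simp add: b_def)
  qed
  then show ?thesis using xnn supp by blast
qed

end


lemma A_nonneg: assumes "\<forall>i j. M i j \<le> (0::real)" shows "0 \<le> necp_system M i c"
  using assms by (cases c) (auto simp: necp_system_def)

lemma A_inl: "necp_system M i (Inl j) = (if i = j then 1 else 0)"
  by (simp add: necp_system_def)
lemma A_inr: "necp_system M i (Inr j) = - M i j"
  by (simp add: necp_system_def)

lemma u_ge: fixes A :: "'n::finite \<Rightarrow> 'c \<Rightarrow> real"
  shows "A i c / q i \<le> col_scale A q c"
  unfolding col_scale_def by (rule Max_ge) auto

lemma u_in: fixes A :: "'n::finite \<Rightarrow> 'c \<Rightarrow> real"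
  shows "\<exists>i. col_scale A q c = A i c / q i"
proof -
  have "col_scale A q c \<in> range (\<lambda>i. A i c / q i)" unfolding col_scale_def by (rule Max_in) auto
  then show ?thesis by auto
qed

lemma u_pos:
  fixes M :: "'n::finite \<Rightarrow> 'n \<Rightarrow> real"
  assumes negcol: "\<forall>j. \<exists>i. M i j < 0" and qpos: "\<forall>i. q i > 0"
  shows "0 < col_scale (necp_system M) q c"
proof (cases c)
  case (Inl j)
  have "0 < necp_system M j c / q j" using qpos Inl by (simp add: A_inl)
  also have "\<dots> \<le> col_scale (necp_system M) q c" by (rule u_ge)
  finally show ?thesis .
next
  case (Inr j)
  obtain i where "M i j < 0" using negcol by blast
  then have "0 < necp_system M i c / q i" using qpos[rule_format, of i] Inr by (simp add: A_inr divide_neg_pos)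
  also have "\<dots> \<le> col_scale (necp_system M) q c" by (rule u_ge)
  finally show ?thesis .
qed

lemma nmat_inst:
  fixes M :: "'n::finite \<Rightarrow> 'n \<Rightarrow> real" and q :: "'n \<Rightarrow> real"
  assumes nonpos: "\<forall>i j. M i j \<le> 0"
    and negcol: "\<forall>j. \<exists>i. M i j < 0"
    and qpos: "\<forall>i. q i > 0"
    and dom: "necp_dominance M q"
  shows "nmat (normalized_matrix (necp_system M) q)"
proof
  let ?A = "necp_system M" and ?u = "col_scale (necp_system M) q"
  let ?N = "normalized_matrix (necp_system M) q"
  have N': "?N i c = (?A i c / q i) / ?u c" for i c
    by (simp add: normalized_matrix_def)
  fix i c
  have u: "0 < ?u c" using u_pos[OF negcol qpos] .
  have a: "?A i c / q i \<le> ?u c" by (rule u_ge)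
  have b: "0 \<le> ?A i c / q i" using A_nonneg[OF nonpos, of i c] qpos[rule_format, of i] by simp
  have c1: "(?A i c / q i) / ?u c \<le> 1" using divide_le_eq_1_pos[OF u] a by blast
  have c0: "0 \<le> (?A i c / q i) / ?u c" by (rule divide_nonneg_pos[OF b u])
  show "0 \<le> ?N i c \<and> ?N i c \<le> 1"
    unfolding N' using c0 c1 by blast
next
  let ?A = "necp_system M" and ?u = "col_scale (necp_system M) q"
  let ?N = "normalized_matrix (necp_system M) q"
  have N': "?N i c = (?A i c / q i) / ?u c" for i c
    by (simp add: normalized_matrix_def)
  fix c
  have u: "0 < ?u c" using u_pos[OF negcol qpos] .
  obtain i where "?u c = ?A i c / q i" using u_in[of ?A q c] by blast
  then have "?N i c = 1" unfolding N' using u by (metis divide_self less_irrefl)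
  then show "\<exists>i. ?N i c = 1" by blast
next
  fix i j :: 'n assume "i \<noteq> j"
  then show "normalized_matrix (necp_system M) q i (Inl j) = 0"
    by (simp add: normalized_matrix_def A_inl)
next
  let ?N = "normalized_matrix (necp_system M) q"
  fix \<sigma> :: "'n \<Rightarrow> 'n + 'n" and i
  assume inj: "inj \<sigma>" and one: "\<forall>k. ?N k (\<sigma> k) = 1"
  have "card (range \<sigma>) = card (UNIV :: 'n set)" using inj by (simp add: card_image)
  moreover have "covers_permutation ?N (range \<sigma>)"
    unfolding covers_permutation_def using inj one by (auto intro!: exI[of _ \<sigma>] inj_on_imp_bij_betw)
  ultimately have "(\<Sum>c\<in>range \<sigma>. ?N i c) < 2"
    using dom unfolding necp_dominance_def dominance_condition_def by blast
  then show "(\<Sum>m\<in>UNIV. ?N i (\<sigma> m)) < 2" by (simp add: sum.reindex[OF inj])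
qed

lemma sumA:
  fixes M :: "'n::finite \<Rightarrow> 'n \<Rightarrow> real"
  shows "(\<Sum>c\<in>UNIV. necp_system M i c * v c) = v (Inl i) + (\<Sum>j\<in>UNIV. - M i j * v (Inr j))"
proof -
  have "(\<Sum>c\<in>UNIV. necp_system M i c * v c) = (\<Sum>j\<in>UNIV. necp_system M i (Inl j) * v (Inl j)) + (\<Sum>j\<in>UNIV. necp_system M i (Inr j) * v (Inr j))"
    using sum.Plus[of "UNIV::'n set" "UNIV::'n set" "\<lambda>c. necp_system M i c * v c"] by (simp add: comp_def)
  also have "(\<Sum>j\<in>UNIV. necp_system M i (Inl j) * v (Inl j)) = (\<Sum>j\<in>UNIV. if i = j then v (Inl j) else 0)"
    by (rule sum.cong) (auto simp: A_inl)
  also have "\<dots> = v (Inl i)" by simp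
  finally show ?thesis by (simp add: A_inr)
qed

lemma sumN:
  fixes M :: "'n::finite \<Rightarrow> 'n \<Rightarrow> real"
  assumes negcol: "\<forall>j. \<exists>i. M i j < 0" and qpos: "\<forall>i. q i > 0"
  shows "(\<Sum>c\<in>UNIV. normalized_matrix (necp_system M) q i c * (col_scale (necp_system M) q c * v c))
     = (v (Inl i) + (\<Sum>j\<in>UNIV. - M i j * v (Inr j))) / q i"
proof -
  have "(\<Sum>c\<in>UNIV. normalized_matrix (necp_system M) q i c * (col_scale (necp_system M) q c * v c))
      = (\<Sum>c\<in>UNIV. necp_system M i c * v c / q i)"
  proof (rule sum.cong)
    fix c
    have "col_scale (necp_system M) q c \<noteq> 0" using u_pos[OF negcol qpos, of c] by simp
    then show "normalized_matrix (necp_system M) q i c * (col_scale (necp_system M) q c * v c) = necp_system M i c * v c / q i"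
      using qpos[rule_format, of i] by (simp add: normalized_matrix_def field_simps)
  qed simp
  also have "\<dots> = (\<Sum>c\<in>UNIV. necp_system M i c * v c) / q i" by (simp add: sum_divide_distrib)
  finally show ?thesis by (simp add: sumA)
qed



definition charset :: "('n::finite \<Rightarrow> 'n \<Rightarrow> real) \<Rightarrow> ('n \<Rightarrow> real) \<Rightarrow> ('n set \<times> 'n set) set" where
  "charset M q = {(W,Z). W \<inter> Z = {} \<and> Z \<noteq> {} \<and>
     (\<forall>i. i \<in> W \<or> (\<exists>j\<in>Z. normalized_matrix (necp_system M) q i (Inr j) = 1))}"

context
  fixes M :: "'n::finite \<Rightarrow> 'n \<Rightarrow> real" and q :: "'n \<Rightarrow> real"
  assumes nonpos: "\<forall>i j. M i j \<le> 0"
    and negcol: "\<forall>j. \<exists>i. M i j < 0"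
    and qpos: "\<forall>i. q i > 0"
    and dom: "necp_dominance M q"
begin

lemma nm: "nmat (normalized_matrix (necp_system M) q)"
  by (rule nmat_inst[OF nonpos negcol qpos dom])

lemma upos: "0 < col_scale (necp_system M) q c"
  by (rule u_pos[OF negcol qpos])

lemma L1:
  assumes "necp_solution M q w z"
  shows "(supp w, supp z) \<in> charset M q"
proof -
  let ?N = "normalized_matrix (necp_system M) q" and ?u = "col_scale (necp_system M) q"
  from assms have eq: "\<forall>i. w i = (\<Sum>j\<in>UNIV. M i j * z j) + q i" and s0: "(\<Sum>i\<in>UNIV. w i * z i) = 0"
    and nz: "z \<noteq> (\<lambda>_. 0)" and nn: "\<forall>i. w i \<ge> 0 \<and> z i \<ge> 0"
    unfolding necp_solution_def by auto
  have "\<forall>i\<in>UNIV. w i * z i = 0" using sum_nonneg_eq_0_iff[of UNIV "\<lambda>i. w i * z i"] s0 nn by simp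
  then have disj: "supp w \<inter> supp z = {}" by (auto simp: supp_def)
  have Zne: "supp z \<noteq> {}" using nz by (auto simp: supp_def fun_eq_iff)
  define v where "v = case_sum w z"
  define x where "x c = ?u c * v c" for c
  have xnn: "\<forall>c. 0 \<le> x c"
  proof
    fix c show "0 \<le> x c" using nn upos[of c] by (cases c) (auto simp: x_def v_def)
  qed
  have xs: "\<forall>i. (\<Sum>c\<in>UNIV. ?N i c * x c) = 1"
  proof
    fix i
    have "v (Inl i) + (\<Sum>j\<in>UNIV. - M i j * v (Inr j)) = q i"
      using eq[rule_format, of i] by (simp add: v_def sum_negf)
    then show "(\<Sum>c\<in>UNIV. ?N i c * x c) = 1"
      unfolding x_def using sumN[OF negcol qpos, of i v] qpos[rule_format, of i] by simp
  qed
  have "\<forall>i. i \<in> supp w \<or> (\<exists>j\<in>supp z. ?N i (Inr j) = 1)"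
  proof
    fix i
    obtain c where c: "x c \<noteq> 0" "?N i c = 1" using nmat.cl_to_tr[OF nm xnn xs] by blast
    show "i \<in> supp w \<or> (\<exists>j\<in>supp z. ?N i (Inr j) = 1)"
    proof (cases c)
      case (Inl j)
      then have "i = j" using c(2) nmat.Ninl[OF nm] by (metis zero_neq_one)
      then show ?thesis using c(1) Inl by (auto simp: x_def v_def supp_def)
    next
      case (Inr j) then show ?thesis using c by (auto simp: x_def v_def supp_def)
    qed
  qed
  then show ?thesis using disj Zne by (simp add: charset_def)
qed

lemma L2:
  assumes "(W, Z) \<in> charset M q"
  shows "\<exists>w z. necp_solution M q w z \<and> supp w = W \<and> supp z = Z"
proof -
  let ?N = "normalized_matrix (necp_system M) q" and ?u = "col_scale (necp_system M) q"
  from assms have disj: "W \<inter> Z = {}" and Zne: "Z \<noteq> {}"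
    and cov0: "\<forall>i. i \<in> W \<or> (\<exists>j\<in>Z. ?N i (Inr j) = 1)" by (auto simp: charset_def)
  let ?J = "Inl ` W \<union> Inr ` Z"
  have cov: "\<forall>i. \<exists>c\<in>?J. ?N i c = 1"
  proof
    fix i show "\<exists>c\<in>?J. ?N i c = 1" using cov0[rule_format, of i] nmat.Ninl1[OF nm, of i] by blast
  qed
  obtain x where x0: "\<forall>c. 0 \<le> x c" and xJ: "{c. x c \<noteq> 0} = ?J"
     and x1: "\<forall>i. (\<Sum>c\<in>UNIV. ?N i c * x c) = 1"
    using nmat.tr_to_cl[OF nm cov] by blast
  have mem: "x c \<noteq> 0 \<longleftrightarrow> c \<in> ?J" for c using xJ by blast
  define w where "w j = x (Inl j) / ?u (Inl j)" for j
  define z where "z j = x (Inr j) / ?u (Inr j)" for j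
  define v where "v = case_sum w z"
  have xv: "x c = ?u c * v c" for c using upos[of c] by (cases c) (auto simp: v_def w_def z_def)
  have sw: "supp w = W"
  proof -
    have "w j \<noteq> 0 \<longleftrightarrow> j \<in> W" for j using mem[of "Inl j"] upos[of "Inl j"] by (auto simp: w_def)
    then show ?thesis by (auto simp: supp_def)
  qed
  have sz: "supp z = Z"
  proof -
    have "z j \<noteq> 0 \<longleftrightarrow> j \<in> Z" for j using mem[of "Inr j"] upos[of "Inr j"] by (auto simp: z_def)
    then show ?thesis by (auto simp: supp_def)
  qed
  have eq: "w i = (\<Sum>j\<in>UNIV. M i j * z j) + q i" for i
  proof -
    have "(\<Sum>c\<in>UNIV. ?N i c * (?u c * v c)) = 1" using x1 xv by simp
    then have "(v (Inl i) + (\<Sum>j\<in>UNIV. - M i j * v (Inr j))) / q i = 1"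
      using sumN[OF negcol qpos, of i v] by simp
    then have "v (Inl i) + (\<Sum>j\<in>UNIV. - M i j * v (Inr j)) = q i"
      using qpos[rule_format, of i] by simp
    then show ?thesis by (simp add: v_def sum_negf)
  qed
  have comp: "(\<Sum>i\<in>UNIV. w i * z i) = 0"
  proof (rule sum.neutral, intro ballI)
    fix i
    have "w i = 0 \<or> z i = 0" using sw sz disj by (auto simp: supp_def)
    then show "w i * z i = 0" by auto
  qed
  have nz: "z \<noteq> (\<lambda>_. 0)" using sz Zne by (auto simp: supp_def)
  have nn: "\<forall>i. w i \<ge> 0 \<and> z i \<ge> 0"
    using x0 upos by (auto simp: w_def z_def less_imp_le)
  have "necp_solution M q w z" unfolding necp_solution_def using eq comp nz nn by auto
  then show ?thesis using sw sz by blast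
qed

lemma qp: "trop_log (q i) = ereal (ln (q i))"
  using qpos[rule_format, of i] by (simp add: trop_log_def)

lemma lndiv: "0 < (a::real) \<Longrightarrow> 0 < b \<Longrightarrow> ln (a / b) = ln a - ln b"
  by (simp add: ln_div)

lemma tl_ninf: "trop_log a \<noteq> \<infinity>" by (simp add: trop_log_def)

lemma Nr: "normalized_matrix (necp_system M) q i (Inr j) = - M i j / (q i * col_scale (necp_system M) q (Inr j))"
  by (simp add: normalized_matrix_def A_inr)

lemma T1:
  assumes "trop_solution (\<lambda>i j. trop_log (- M i j)) (\<lambda>i. trop_log (q i)) w z"
  shows "(trop_supp w, trop_supp z) \<in> charset M q"
proof -
  let ?N = "normalized_matrix (necp_system M) q" and ?u = "col_scale (necp_system M) q"
  let ?Mm = "\<lambda>i j. trop_log (- M i j)"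
  from assms have fin: "\<forall>i. w i \<noteq> \<infinity> \<and> z i \<noteq> \<infinity>"
    and row: "\<forall>i. max (w i) (Max (range (\<lambda>j. ?Mm i j + z j))) = ereal (ln (q i))"
    and comp: "Max (range (\<lambda>i. w i + z i)) = - \<infinity>" and nz: "z \<noteq> (\<lambda>_. - \<infinity>)"
    unfolding trop_solution_def by (auto simp: qp)
  have "w i = -\<infinity> \<or> z i = -\<infinity>" for i
  proof -
    have "w i + z i \<le> Max (range (\<lambda>i. w i + z i))" by (rule Max_ge) auto
    then have "w i + z i = -\<infinity>" using comp by simp
    then show ?thesis by simp
  qed
  then have disj: "trop_supp w \<inter> trop_supp z = {}" by (auto simp: trop_supp_def)
  have Zne: "trop_supp z \<noteq> {}" using nz by (auto simp: trop_supp_def fun_eq_iff)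
  have bound: "?Mm k j + z j \<le> ereal (ln (q k))" for k j
  proof -
    have "?Mm k j + z j \<le> Max (range (\<lambda>j. ?Mm k j + z j))" by (rule Max_ge) auto
    also have "\<dots> \<le> max (w k) (Max (range (\<lambda>j. ?Mm k j + z j)))" by simp
    finally show ?thesis using row by simp
  qed
  have "\<forall>i. i \<in> trop_supp w \<or> (\<exists>j\<in>trop_supp z. ?N i (Inr j) = 1)"
  proof
    fix i
    show "i \<in> trop_supp w \<or> (\<exists>j\<in>trop_supp z. ?N i (Inr j) = 1)"
    proof (cases "w i = -\<infinity>")
      case False then show ?thesis by (simp add: trop_supp_def)
    next
      case True
      have "Max (range (\<lambda>j. ?Mm i j + z j)) = ereal (ln (q i))" using row[rule_format, of i] True by simp
      moreover have "Max (range (\<lambda>j. ?Mm i j + z j)) \<in> range (\<lambda>j. ?Mm i j + z j)" by (rule Max_in) auto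
      ultimately have "ereal (ln (q i)) \<in> range (\<lambda>j. ?Mm i j + z j)" by simp
      then obtain j where j0: "ereal (ln (q i)) = ?Mm i j + z j" by (rule rangeE)
      then have j: "?Mm i j + z j = ereal (ln (q i))" by simp
      have zj: "z j \<noteq> -\<infinity>"
      proof
        assume "z j = -\<infinity>"
        then have "?Mm i j + z j = -\<infinity>" using tl_ninf[of "- M i j"] by simp
        then show False using j by simp
      qed
      have Mij: "?Mm i j \<noteq> -\<infinity>"
      proof
        assume "?Mm i j = -\<infinity>"
        then have "?Mm i j + z j = -\<infinity>" using fin[rule_format, of j] by simp
        then show False using j by simp
      qed
      then have "M i j \<noteq> 0" by (auto simp: trop_log_def)
      then have Mpos: "0 < - M i j" using nonpos[rule_format, of i j] by simp
      obtain zr where zr: "z j = ereal zr" using zj fin by (cases "z j") auto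
      have e1: "ln (- M i j) + zr = ln (q i)" using j zr Mpos by (simp add: trop_log_def)
      obtain k where k: "?u (Inr j) = necp_system M k (Inr j) / q k" using u_in[of "necp_system M" q "Inr j"] by blast
      have kk: "?u (Inr j) = - M k j / q k" using k by (simp add: A_inr)
      have Mk: "0 < - M k j" using kk upos[of "Inr j"] qpos[rule_format, of k]
        by (metis divide_le_0_iff less_eq_real_def not_le)
      have "?Mm k j + z j \<le> ereal (ln (q k))" by (rule bound)
      then have e2: "ln (- M k j) + zr \<le> ln (q k)" using zr Mk by (simp add: trop_log_def)
      have "ln (- M k j / q k) \<le> ln (- M i j / q i)"
        using e1 e2 lndiv[OF Mk qpos[rule_format, of k]] lndiv[OF Mpos qpos[rule_format, of i]] by linarith
      moreover have p1: "0 < - M k j / q k" by (rule divide_pos_pos[OF Mk qpos[rule_format, of k]])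
      moreover have p2: "0 < - M i j / q i" by (rule divide_pos_pos[OF Mpos qpos[rule_format, of i]])
      ultimately have "- M k j / q k \<le> - M i j / q i"
        using ln_le_cancel_iff[OF p1 p2] by blast
      moreover have "- M i j / q i \<le> ?u (Inr j)" using u_ge[of "necp_system M" i "Inr j" q] by (simp add: A_inr)
      ultimately have "- M i j / q i = ?u (Inr j)" using kk by simp
      then have "?N i (Inr j) = 1" using qpos[rule_format, of i] upos[of "Inr j"]
        by (simp add: Nr field_simps)
      moreover have "j \<in> trop_supp z" using zj by (simp add: trop_supp_def)
      ultimately show ?thesis by blast
    qed
  qed
  then show ?thesis using disj Zne by (simp add: charset_def)
qed

lemma T2:
  assumes "(W, Z) \<in> charset M q"
  shows "\<exists>w z. trop_solution (\<lambda>i j. trop_log (- M i j)) (\<lambda>i. trop_log (q i)) w z \<and> trop_supp w = W \<and> trop_supp z = Z"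
proof -
  let ?N = "normalized_matrix (necp_system M) q" and ?u = "col_scale (necp_system M) q"
  let ?Mm = "\<lambda>i j. trop_log (- M i j)"
  from assms have disj: "W \<inter> Z = {}" and Zne: "Z \<noteq> {}"
    and cov0: "\<forall>i. i \<in> W \<or> (\<exists>j\<in>Z. ?N i (Inr j) = 1)" by (auto simp: charset_def)
  define w where "w i = (if i \<in> W then ereal (ln (q i)) else -\<infinity>)" for i
  define z where "z j = (if j \<in> Z then ereal (- ln (?u (Inr j))) else -\<infinity>)" for j
  have bound: "?Mm i j + z j \<le> ereal (ln (q i))" for i j
  proof (cases "j \<in> Z \<and> M i j \<noteq> 0")
    case False then show ?thesis by (auto simp: z_def trop_log_def)
  next
    case True
    have Mpos: "0 < - M i j" using True nonpos[rule_format, of i j] by simp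
    have U: "0 < ?u (Inr j)" by (rule upos)
    have "- M i j / q i \<le> ?u (Inr j)" using u_ge[of "necp_system M" i "Inr j" q] by (simp add: A_inr)
    then have "- M i j \<le> ?u (Inr j) * q i" using pos_divide_le_eq[of "q i" "- M i j" "?u (Inr j)"] qpos[rule_format, of i] by blast
    then have "- M i j \<le> q i * ?u (Inr j)" by (simp add: mult.commute)
    then have "ln (- M i j) \<le> ln (q i * ?u (Inr j))" using Mpos by simp
    also have "\<dots> = ln (q i) + ln (?u (Inr j))" using qpos[rule_format, of i] U by (simp add: ln_mult)
    finally show ?thesis using True Mpos by (simp add: z_def trop_log_def)
  qed
  have attain: "\<exists>j. ?Mm i j + z j = ereal (ln (q i))" if ni: "i \<notin> W" for i
  proof -
    obtain j where j: "j \<in> Z" "?N i (Inr j) = 1" using cov0 ni by blast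
    have U: "0 < ?u (Inr j)" by (rule upos)
    have e: "- M i j = q i * ?u (Inr j)" using j(2) qpos[rule_format, of i] U by (simp add: Nr field_simps)
    then have Mpos: "0 < - M i j" using qpos[rule_format, of i] U by simp
    have "ln (- M i j) = ln (q i) + ln (?u (Inr j))" using e qpos[rule_format, of i] U by (simp add: ln_mult)
    then have "?Mm i j + z j = ereal (ln (q i))" using j(1) Mpos by (simp add: z_def trop_log_def)
    then show ?thesis by blast
  qed
  have row: "max (w i) (Max (range (\<lambda>j. ?Mm i j + z j))) = trop_log (q i)" for i
  proof -
    have le: "Max (range (\<lambda>j. ?Mm i j + z j)) \<le> ereal (ln (q i))"
      using bound by (auto intro!: Max.boundedI)
    show ?thesis
    proof (cases "i \<in> W")
      case True
      then have "w i = ereal (ln (q i))" by (simp add: w_def)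
      then show ?thesis using le by (simp add: qp max_absorb1)
    next
      case False
      obtain j where "?Mm i j + z j = ereal (ln (q i))" using attain[OF False] by blast
      moreover have "?Mm i j + z j \<le> Max (range (\<lambda>j. ?Mm i j + z j))" by (rule Max_ge) auto
      ultimately have "Max (range (\<lambda>j. ?Mm i j + z j)) = ereal (ln (q i))" using le by simp
      then show ?thesis using False by (simp add: w_def qp)
    qed
  qed
  have c: "(\<lambda>i. w i + z i) = (\<lambda>_. -\<infinity>)" using disj by (auto simp: w_def z_def fun_eq_iff)
  have "range (\<lambda>i. w i + z i) = {-\<infinity>}" unfolding c by simp
  then have comp: "Max (range (\<lambda>i. w i + z i)) = -\<infinity>" by simp
  have nz: "z \<noteq> (\<lambda>_. -\<infinity>)" using Zne by (auto simp: z_def fun_eq_iff)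
  have fin: "\<forall>i. w i \<noteq> \<infinity> \<and> z i \<noteq> \<infinity>" by (simp add: w_def z_def)
  have "trop_solution ?Mm (\<lambda>i. trop_log (q i)) w z"
    unfolding trop_solution_def using fin row comp nz by blast
  moreover have "trop_supp w = W" by (auto simp: trop_supp_def w_def)
  moreover have "trop_supp z = Z" by (auto simp: trop_supp_def z_def)
  ultimately show ?thesis by blast
qed

end

theorem theorem1p4:
  fixes M :: "'n::finite \<Rightarrow> 'n \<Rightarrow> real" and q :: "'n \<Rightarrow> real"
  assumes nonpos: "\<forall>i j. M i j \<le> 0"
    and negcol: "\<forall>j. \<exists>i. M i j < 0"
    and qpos: "\<forall>i. q i > 0"
    and dom: "necp_dominance M q"
  shows "{(supp w, supp z) | w z. necp_solution M q w z} =
         {(trop_supp w, trop_supp z) | w z.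
            trop_solution (\<lambda>i j. trop_log (- M i j)) (\<lambda>i. trop_log (q i)) w z}"
proof -
  have 1: "{(supp w, supp z) | w z. necp_solution M q w z} = charset M q"
  proof (intro equalityI subsetI)
    fix p assume "p \<in> {(supp w, supp z) | w z. necp_solution M q w z}"
    then obtain w z where "p = (supp w, supp z)" "necp_solution M q w z" by blast
    then show "p \<in> charset M q" using L1[OF nonpos negcol qpos dom] by simp
  next
    fix p assume p: "p \<in> charset M q"
    obtain W Z where pz: "p = (W, Z)" by (cases p)
    obtain w z where "necp_solution M q w z" "supp w = W" "supp z = Z"
      using L2[OF nonpos negcol qpos dom] p pz by blast
    then show "p \<in> {(supp w, supp z) | w z. necp_solution M q w z}" using pz by blast
  qed
  have 2: "{(trop_supp w, trop_supp z) | w z.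
            trop_solution (\<lambda>i j. trop_log (- M i j)) (\<lambda>i. trop_log (q i)) w z} = charset M q"
  proof (intro equalityI subsetI)
    fix p assume "p \<in> {(trop_supp w, trop_supp z) | w z.
            trop_solution (\<lambda>i j. trop_log (- M i j)) (\<lambda>i. trop_log (q i)) w z}"
    then obtain w z where "p = (trop_supp w, trop_supp z)"
        "trop_solution (\<lambda>i j. trop_log (- M i j)) (\<lambda>i. trop_log (q i)) w z" by blast
    then show "p \<in> charset M q" using T1[OF nonpos negcol qpos dom] by simp
  next
    fix p assume p: "p \<in> charset M q"
    obtain W Z where pz: "p = (W, Z)" by (cases p)
    obtain w z where "trop_solution (\<lambda>i j. trop_log (- M i j)) (\<lambda>i. trop_log (q i)) w z"
        "trop_supp w = W" "trop_supp z = Z"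
      using T2[OF nonpos negcol qpos dom] p pz by blast
    then show "p \<in> {(trop_supp w, trop_supp z) | w z.
            trop_solution (\<lambda>i j. trop_log (- M i j)) (\<lambda>i. trop_log (q i)) w z}" using pz by blast
  qed
  show ?thesis using 1 2 by simp
qed


end
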